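(* Let $F$ and $G$ be finite graphs, let $n=v(G)$, and let $W_G$ be a graphon representation of $G$. Then $\mathsf{fcov}(F,G)=n\cdot\mathsf{fcov}(F,W_G)$.
   Context: $(\Omega,\nu)$ is an atomless Borel probability space; a graphon is a symmetric measurable $W:\Omega^2\to[0,1]$. Let $F$ have vertex set $[k]$. For a finite graph $G$, $\mathcal{F}_F(G)=\{(u_1,\dots,u_k)\in V(G)^k:u_iu_j\in E(G)\text{ for each }ij\in E(F)\}$. A fractional $F$-cover of $G$ is $\mathfrak{c}:V(G)\to[0,1]$ with $\sum_{i=1}^k\mathfrak{c}(u_i)\ge1$ for each $(u_1,\dots,u_k)\in\mathcal{F}_F(G)$; its size is $\sum_v\mathfrak{c}(v)$, and $\mathsf{fcov}(F,G)$ is the minimum size. A graphon representation $W_G$ of $G$ with $V(G)=\{v_1,\dots,v_n\}$: partition $\Omega$ into measurable sets $\Omega_1,\dots,\Omega_n$ of measure $1/n$ and let $W_G=1$ on $\Omega_i\times\Omega_j$ if $v_iv_j\in E(G)$, $0$ otherwise. For a graphon $W$, $W^{\otimes F}(x_1,\dots,x_k)=\prod_{ij\in E(F),i<j}W(x_i,x_j)$ and $\mathcal{F}_F(W)=\{W^{\otimes F}\neq0\}$. A fractional $F$-cover of $W$ is a measurable $\mathfrak{c}:\Omega\to[0,1]$ with $\nu^k\big(\mathcal{F}_F(W)\cap\{(x_1,\dots,x_k):\sum_{i=1}^k\mathfrak{c}(x_i)<1\}\big)=0$; its size is $\int\mathfrak{c}\,\mathrm{d}\nu$, and $\mathsf{fcov}(F,W)$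 is the infimum of sizes. *)

theory Defs
  imports "HOL-Probability.Probability"
begin

text \<open>Graphs: a finite simple graph on vertex set V is given by a symmetric irreflexive
  edge relation E with edges inside V.  The pattern graph F has vertex set {0..<k}.\<close>

definition simple_graph :: "'v set \<Rightarrow> ('v \<Rightarrow> 'v \<Rightarrow> bool) \<Rightarrow> bool" where
  "simple_graph V E \<longleftrightarrow> finite V \<and> (\<forall>u v. E u v \<longrightarrow> u \<in> V \<and> v \<in> V)
     \<and> (\<forall>u v. E u v \<longrightarrow> E v u) \<and> (\<forall>v. \<not> E v v)"

definition hom_tuples :: "nat \<Rightarrow> (nat \<Rightarrow> nat \<Rightarrow> bool) \<Rightarrow> 'v set \<Rightarrow> ('v \<Rightarrow> 'v \<Rightarrow> bool)
    \<Rightarrow> (nat \<Rightarrow> 'v) set" where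
  "hom_tuples k EF V E = {u \<in> {0..<k} \<rightarrow>\<^sub>E V. \<forall>i<k. \<forall>j<k. EF i j \<longrightarrow> E (u i) (u j)}"

definition is_frac_cover_graph :: "nat \<Rightarrow> (nat \<Rightarrow> nat \<Rightarrow> bool) \<Rightarrow> 'v set \<Rightarrow> ('v \<Rightarrow> 'v \<Rightarrow> bool)
    \<Rightarrow> ('v \<Rightarrow> real) \<Rightarrow> bool" where
  "is_frac_cover_graph k EF V E c \<longleftrightarrow> (\<forall>v\<in>V. 0 \<le> c v \<and> c v \<le> 1)
     \<and> (\<forall>u\<in>hom_tuples k EF V E. (\<Sum>i<k. c (u i)) \<ge> 1)"

text \<open>fcov(F,G): minimum (infimum; +infinity if no cover exists) size of a fractional F-cover.\<close>
definition fcov_graph :: "nat \<Rightarrow> (nat \<Rightarrow> nat \<Rightarrow> bool) \<Rightarrow> 'v set \<Rightarrow> ('v \<Rightarrow> 'v \<Rightarrow> bool) \<Rightarrow> ereal" where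
  "fcov_graph k EF V E = Inf {ereal (\<Sum>v\<in>V. c v) | c. is_frac_cover_graph k EF V E c}"

definition atomless :: "'a measure \<Rightarrow> bool" where
  "atomless M \<longleftrightarrow> (\<forall>A\<in>sets M. emeasure M A > 0 \<longrightarrow>
     (\<exists>B\<in>sets M. B \<subseteq> A \<and> 0 < emeasure M B \<and> emeasure M B < emeasure M A))"

definition is_graphon :: "'a measure \<Rightarrow> ('a \<Rightarrow> 'a \<Rightarrow> real) \<Rightarrow> bool" where
  "is_graphon M W \<longleftrightarrow> (\<forall>x\<in>space M. \<forall>y\<in>space M. W x y = W y x \<and> 0 \<le> W x y \<and> W x y \<le> 1)
     \<and> (\<lambda>(x, y). W x y) \<in> borel_measurable (M \<Otimes>\<^sub>M M)"

definition graphon_tensor :: "nat \<Rightarrow> (nat \<Rightarrow> nat \<Rightarrow> bool) \<Rightarrow> ('a \<Rightarrow> 'a \<Rightarrow> real) \<Rightarrow> (nat \<Rightarrow> 'a) \<Rightarrow> real" where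
  "graphon_tensor k EF W x = (\<Prod>(i, j)\<in>{(i, j). i < j \<and> j < k \<and> EF i j}. W (x i) (x j))"

definition hom_set_graphon :: "'a measure \<Rightarrow> nat \<Rightarrow> (nat \<Rightarrow> nat \<Rightarrow> bool) \<Rightarrow> ('a \<Rightarrow> 'a \<Rightarrow> real)
    \<Rightarrow> (nat \<Rightarrow> 'a) set" where
  "hom_set_graphon M k EF W = {x \<in> space (PiM {0..<k} (\<lambda>_. M)). graphon_tensor k EF W x \<noteq> 0}"

definition is_frac_cover_graphon :: "'a measure \<Rightarrow> nat \<Rightarrow> (nat \<Rightarrow> nat \<Rightarrow> bool) \<Rightarrow> ('a \<Rightarrow> 'a \<Rightarrow> real)
    \<Rightarrow> ('a \<Rightarrow> real) \<Rightarrow> bool" where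
  "is_frac_cover_graphon M k EF W c \<longleftrightarrow> c \<in> borel_measurable M
     \<and> (\<forall>x\<in>space M. 0 \<le> c x \<and> c x \<le> 1)
     \<and> hom_set_graphon M k EF W \<inter> {x \<in> space (PiM {0..<k} (\<lambda>_. M)). (\<Sum>i<k. c (x i)) < 1}
         \<in> null_sets (PiM {0..<k} (\<lambda>_. M))"

definition fcov_graphon :: "'a measure \<Rightarrow> nat \<Rightarrow> (nat \<Rightarrow> nat \<Rightarrow> bool) \<Rightarrow> ('a \<Rightarrow> 'a \<Rightarrow> real) \<Rightarrow> ereal" where
  "fcov_graphon M k EF W = Inf {ereal (integral\<^sup>L M c) | c. is_frac_cover_graphon M k EF W c}"

definition is_vertex_partition :: "'a measure \<Rightarrow> 'v set \<Rightarrow> ('v \<Rightarrow> 'a set) \<Rightarrow> bool" where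
  "is_vertex_partition M V P \<longleftrightarrow> (\<forall>v\<in>V. P v \<in> sets M \<and> measure M (P v) = 1 / real (card V))
     \<and> disjoint_family_on P V \<and> (\<Union>v\<in>V. P v) = space M"

definition graphon_rep :: "'v set \<Rightarrow> ('v \<Rightarrow> 'v \<Rightarrow> bool) \<Rightarrow> ('v \<Rightarrow> 'a set) \<Rightarrow> 'a \<Rightarrow> 'a \<Rightarrow> real" where
  "graphon_rep V E P x y = (if \<exists>v\<in>V. \<exists>w\<in>V. x \<in> P v \<and> y \<in> P w \<and> E v w then 1 else 0)"

end

theory Submission
  imports Defs
begin


lemma part_facts:
  assumes "prob_space M" "is_vertex_partition M V P"
  shows "finite V \<Longrightarrow> card V > 0" "V \<noteq> {}"
    "\<And>v. v \<in> V \<Longrightarrow> P v \<in> sets M"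
    "\<And>v. v \<in> V \<Longrightarrow> measure M (P v) = 1 / real (card V)"
    "\<And>x. x \<in> space M \<Longrightarrow> \<exists>!v. v \<in> V \<and> x \<in> P v"
proof -
  have d: "disjoint_family_on P V" and u: "(\<Union>v\<in>V. P v) = space M"
    using assms(2) unfolding is_vertex_partition_def by auto
  have "space M \<noteq> {}" using assms(1) prob_space.not_empty by blast
  then show ne: "V \<noteq> {}" using u by auto
  then show "finite V \<Longrightarrow> card V > 0" by auto
  show "\<And>v. v \<in> V \<Longrightarrow> P v \<in> sets M" "\<And>v. v \<in> V \<Longrightarrow> measure M (P v) = 1 / real (card V)"
    using assms(2) unfolding is_vertex_partition_def by auto
  show "\<And>x. x \<in> space M \<Longrightarrow> \<exists>!v. v \<in> V \<and> x \<in> P v"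
    using u d unfolding disjoint_family_on_def by blast
qed

lemma step_val:
  assumes "finite V" "disjoint_family_on P V" "v \<in> V" "x \<in> P v"
  shows "(\<Sum>w\<in>V. c w * indicator (P w) x) = (c v :: real)"
proof -
  have "(\<Sum>w\<in>V. c w * indicator (P w) x) = (\<Sum>w\<in>V. if w = v then c v else 0)"
    using assms unfolding disjoint_family_on_def
    by (intro sum.cong) (auto simp: indicator_def)
  also have "\<dots> = c v" using assms by simp
  finally show ?thesis .
qed



lemma graph_to_graphon:
  assumes pm: "prob_space M" and vp: "is_vertex_partition M V P" and fin: "finite V"
    and sgF: "simple_graph {0..<k} EF" and sgG: "simple_graph V E"
    and cov: "is_frac_cover_graph k EF V E c"
  defines "d \<equiv> (\<lambda>x. \<Sum>w\<in>V. c w * indicator (P w) x)"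
  shows "is_frac_cover_graphon M k EF (graphon_rep V E P) d"
    "real (card V) * integral\<^sup>L M d = (\<Sum>v\<in>V. c v)"
proof -
  interpret prob_space M by fact
  note pf = part_facts[OF pm vp]
  have dj: "disjoint_family_on P V" using vp unfolding is_vertex_partition_def by auto
  have dv: "d x = c v" if "v \<in> V" "x \<in> P v" for v x
    unfolding d_def using step_val[OF fin dj that] .
  have c01: "0 \<le> c v \<and> c v \<le> 1" if "v \<in> V" for v
    using cov that unfolding is_frac_cover_graph_def by auto
  have dm: "d \<in> borel_measurable M" unfolding d_def
    using pf(3) by (intro borel_measurable_sum) auto
  have d01: "0 \<le> d x \<and> d x \<le> 1" if "x \<in> space M" for x
    using pf(5)[OF that] dv c01 by metis
  have bad: "hom_set_graphon M k EF (graphon_rep V E P) \<inter>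
      {x \<in> space (PiM {0..<k} (\<lambda>_. M)). (\<Sum>i<k. d (x i)) < 1} = {}"
  proof (rule ccontr)
    assume "\<not> ?thesis"
    then obtain x where xs: "x \<in> space (PiM {0..<k} (\<lambda>_. M))"
      and tn: "graphon_tensor k EF (graphon_rep V E P) x \<noteq> 0"
      and lt: "(\<Sum>i<k. d (x i)) < 1"
      unfolding hom_set_graphon_def by auto
    have xsp: "x i \<in> space M" if "i < k" for i using xs that by (auto simp: space_PiM)
    define u where "u = (\<lambda>i. if i < k then (THE v. v \<in> V \<and> x i \<in> P v) else undefined)"
    have uV: "u i \<in> V \<and> x i \<in> P (u i)" if "i < k" for i
      using theI'[OF pf(5)[OF xsp[OF that]]] that unfolding u_def by auto
    have uuniq: "w = u i" if "i < k" "w \<in> V" "x i \<in> P w" for i w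
      using pf(5)[OF xsp[OF that(1)]] uV[OF that(1)] that by blast
    have fS: "finite {(i, j). i < j \<and> j < k \<and> EF i j}"
      by (rule finite_subset[of _ "{..<k} \<times> {..<k}"]) auto
    have nz: "graphon_rep V E P (x i) (x j) \<noteq> 0" if "i < j" "j < k" "EF i j" for i j
      using tn fS that unfolding graphon_tensor_def by (auto simp: prod_zero_iff)
    have Elt: "E (u i) (u j)" if "i < j" "j < k" "EF i j" for i j
    proof -
      from nz[OF that] obtain v w where "v \<in> V" "w \<in> V" "x i \<in> P v" "x j \<in> P w" "E v w"
        unfolding graphon_rep_def by (auto split: if_splits)
      then show ?thesis using uuniq that by (metis order.strict_trans)
    qed
    have Eall: "E (u i) (u j)" if "i < k" "j < k" "EF i j" for i j
    proof -
      consider "i < j" | "i = j" | "j < i" by arith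
      then show ?thesis
      proof cases
        case 1 then show ?thesis using Elt that by blast
      next
        case 2 then show ?thesis using sgF that unfolding simple_graph_def by blast
      next
        case 3
        have "EF j i" using sgF that unfolding simple_graph_def by blast
        then have "E (u j) (u i)" using Elt 3 that by blast
        then show ?thesis using sgG unfolding simple_graph_def by blast
      qed
    qed
    have "u \<in> hom_tuples k EF V E"
      unfolding hom_tuples_def using uV Eall by (auto simp: u_def PiE_def extensional_def)
    then have "(\<Sum>i<k. c (u i)) \<ge> 1" using cov unfolding is_frac_cover_graph_def by auto
    moreover have "(\<Sum>i<k. d (x i)) = (\<Sum>i<k. c (u i))"
      using uV dv by (intro sum.cong) auto
    ultimately show False using lt by simp
  qed
  show "is_frac_cover_graphon M k EF (graphon_rep V E P) d"
    unfolding is_frac_cover_graphon_def using dm d01 bad by simp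
  have "integral\<^sup>L M d = (\<Sum>w\<in>V. integral\<^sup>L M (\<lambda>x. c w * indicator (P w) x))"
    unfolding d_def using pf(3) by (intro Bochner_Integration.integral_sum[where f="\<lambda>w x. c w * indicator (P w) x"]) (auto simp: emeasure_eq_measure)
  also have "\<dots> = (\<Sum>w\<in>V. c w / real (card V))"
    using pf(3,4) by (intro sum.cong) auto
  finally show "real (card V) * integral\<^sup>L M d = (\<Sum>v\<in>V. c v)"
    using pf(1)[OF fin] by (simp add: sum_divide_distrib[symmetric])
qed



lemma graphon_to_graph:
  assumes pm: "prob_space M" and vp: "is_vertex_partition M V P" and fin: "finite V"
    and cov: "is_frac_cover_graphon M k EF (graphon_rep V E P) c"
  defines "c' \<equiv> (\<lambda>v. real (card V) * integral\<^sup>L M (\<lambda>x. indicator (P v) x * c x))"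
  shows "is_frac_cover_graph k EF V E c'"
    "(\<Sum>v\<in>V. c' v) = real (card V) * integral\<^sup>L M c"
proof -
  interpret prob_space M by fact
  note pf = part_facts[OF pm vp]
  have n0: "real (card V) > 0" using pf(1)[OF fin] by simp
  have cm[measurable]: "c \<in> borel_measurable M" and c01: "\<And>x. x \<in> space M \<Longrightarrow> 0 \<le> c x \<and> c x \<le> 1"
    and N: "hom_set_graphon M k EF (graphon_rep V E P) \<inter>
      {x \<in> space (PiM {0..<k} (\<lambda>_. M)). (\<Sum>i<k. c (x i)) < 1} \<in> null_sets (PiM {0..<k} (\<lambda>_. M))"
    using cov unfolding is_frac_cover_graphon_def by auto
  have ci: "integrable M c"
    by (rule integrable_const_bound[where B=1]) (use c01 in auto)
  have cii: "integrable M (\<lambda>x. indicator (P v) x * c x)" if "v \<in> V" for v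
    using integrable_mult_indicator[OF pf(3)[OF that] ci] by simp
  have ii: "integrable M (\<lambda>x. indicator (P v) x * a)" if "v \<in> V" for v and a :: real
    using pf(3)[OF that] by (auto simp: emeasure_eq_measure)
  have int_ind: "integral\<^sup>L M (\<lambda>x. indicator (P v) x * a) = a / real (card V)" if "v \<in> V" for v and a :: real
    using pf(3,4)[OF that] by simp
  have "(\<Sum>v\<in>V. integral\<^sup>L M (\<lambda>x. indicator (P v) x * c x))
      = integral\<^sup>L M (\<lambda>x. \<Sum>v\<in>V. indicator (P v) x * c x)"
    by (rule Bochner_Integration.integral_sum[where f="\<lambda>v x. indicator (P v) x * c x", symmetric])
      (use cii in auto)
  also have "\<dots> = integral\<^sup>L M c"
  proof (rule Bochner_Integration.integral_cong)
    fix x assume "x \<in> space M"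
    then obtain v where "v \<in> V" "x \<in> P v" using pf(5) by blast
    have dj: "disjoint_family_on P V" using vp unfolding is_vertex_partition_def by auto
    show "(\<Sum>v\<in>V. indicator (P v) x * c x) = c x"
      using step_val[OF fin dj \<open>v \<in> V\<close> \<open>x \<in> P v\<close>, of "\<lambda>_. c x"]
      by (simp add: mult.commute)
  qed simp
  finally show "(\<Sum>v\<in>V. c' v) = real (card V) * integral\<^sup>L M c"
    unfolding c'_def by (simp add: sum_distrib_left[symmetric])
  have c'01: "0 \<le> c' v \<and> c' v \<le> 1" if v: "v \<in> V" for v
  proof -
    have "0 \<le> integral\<^sup>L M (\<lambda>x. indicator (P v) x * c x)"
      using c01 by (intro Bochner_Integration.integral_nonneg) (auto simp: indicator_def)
    moreover have "integral\<^sup>L M (\<lambda>x. indicator (P v) x * c x) \<le> integral\<^sup>L M (\<lambda>x. indicator (P v) x * 1)"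
      using c01 cii[OF v] ii[OF v] by (intro Bochner_Integration.integral_mono) (auto simp: indicator_def)
    ultimately show ?thesis
    proof -
      let ?I = "integral\<^sup>L M (\<lambda>x. indicator (P v) x * c x)"
      assume a: "0 \<le> ?I" "?I \<le> integral\<^sup>L M (\<lambda>x. indicator (P v) x * 1)"
      have b: "?I \<le> 1 / real (card V)" using a(2) int_ind[OF v, of 1] by simp
      have "real (card V) * ?I \<le> real (card V) * (1 / real (card V))"
        using b n0 by (intro mult_left_mono) auto
      then show ?thesis using a(1) n0 unfolding c'_def by simp
    qed
  qed
  define A where "A v = {x \<in> P v. c x \<le> c' v}" for v
  have Asets: "A v \<in> sets M" if "v \<in> V" for v
    using pf(3)[OF that] unfolding A_def by measurable
  have Apos: "emeasure M (A v) > 0" if v: "v \<in> V" for v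
  proof (rule ccontr)
    assume "\<not> ?thesis"
    then have A0: "A v \<in> null_sets M" using Asets[OF v] by (auto simp: null_sets_def)
    have "integral\<^sup>L M (\<lambda>x. indicator (P v) x * (c' v)) < integral\<^sup>L M (\<lambda>x. indicator (P v) x * c x)"
    proof (rule integral_less_AE[where A="P v"])
      show "integrable M (\<lambda>x. indicator (P v) x * c' v)" using ii[OF v] .
      show "integrable M (\<lambda>x. indicator (P v) x * c x)" using cii[OF v] .
      show "emeasure M (P v) \<noteq> 0" using pf(3,4)[OF v] n0 by (simp add: emeasure_eq_measure)
      show "P v \<in> sets M" using pf(3)[OF v] .
      show "AE x in M. x \<in> P v \<longrightarrow> indicator (P v) x * c' v \<noteq> indicator (P v) x * c x"
        using AE_not_in[OF A0] by eventually_elim (auto simp: A_def)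
      show "AE x in M. indicator (P v) x * c' v \<le> indicator (P v) x * c x"
        using AE_not_in[OF A0] by eventually_elim (auto simp: A_def indicator_def)
    qed
    moreover have "integral\<^sup>L M (\<lambda>x. indicator (P v) x * c x) = c' v / real (card V)"
      unfolding c'_def using n0 by simp
    ultimately show False using int_ind[OF v, of "c' v"] by simp
  qed
  have "(\<Sum>i<k. c' (u i)) \<ge> 1" if u: "u \<in> hom_tuples k EF V E" for u
  proof -
    have uV: "u i \<in> V" if "i < k" for i using u that unfolding hom_tuples_def by auto
    have uE: "E (u i) (u j)" if "i < k" "j < k" "EF i j" for i j
      using u that unfolding hom_tuples_def by auto
    define B where "B = PiE {0..<k} (\<lambda>i. A (u i))"
    interpret PS: product_sigma_finite "\<lambda>_. M" by unfold_locales
    have "emeasure (PiM {0..<k} (\<lambda>_. M)) B = (\<Prod>i\<in>{0..<k}. emeasure M (A (u i)))"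
      unfolding B_def using Asets uV by (intro PS.emeasure_PiM) auto
    also have "\<dots> > 0"
    proof -
      have "emeasure M (A (u i)) \<noteq> 0" if "i \<in> {0..<k}" for i
        using Apos[OF uV, of i] that by auto
      then have "(\<Prod>i\<in>{0..<k}. emeasure M (A (u i))) \<noteq> 0" by (simp add: prod_zero_iff)
      then show ?thesis by (simp add: zero_less_iff_neq_zero)
    qed
    finally have Bpos: "emeasure (PiM {0..<k} (\<lambda>_. M)) B > 0" .
    have Bsets: "B \<in> sets (PiM {0..<k} (\<lambda>_. M))"
      unfolding B_def using Asets uV by (intro sets_PiM_I_finite) auto
    have "\<not> B \<subseteq> hom_set_graphon M k EF (graphon_rep V E P) \<inter>
      {x \<in> space (PiM {0..<k} (\<lambda>_. M)). (\<Sum>i<k. c (x i)) < 1}"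
    proof
      assume "B \<subseteq> hom_set_graphon M k EF (graphon_rep V E P) \<inter>
        {x \<in> space (PiM {0..<k} (\<lambda>_. M)). (\<Sum>i<k. c (x i)) < 1}"
      then have "B \<in> null_sets (PiM {0..<k} (\<lambda>_. M))" using N Bsets null_sets_subset by blast
      then show False using Bpos by (simp add: null_sets_def)
    qed
    then obtain x where xB: "x \<in> B" and xn: "x \<notin> hom_set_graphon M k EF (graphon_rep V E P) \<inter>
        {x \<in> space (PiM {0..<k} (\<lambda>_. M)). (\<Sum>i<k. c (x i)) < 1}" by blast
    have xA: "x i \<in> A (u i)" if "i < k" for i using xB that unfolding B_def by auto
    have xP: "x i \<in> P (u i)" if "i < k" for i using xA[OF that] unfolding A_def by auto
    have xsp: "x \<in> space (PiM {0..<k} (\<lambda>_. M))"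
      using Bsets xB sets.sets_into_space by blast
    have "graphon_tensor k EF (graphon_rep V E P) x = 1"
      unfolding graphon_tensor_def
    proof (rule prod.neutral, clarify)
      fix a b assume ab: "a < b" "b < k" "EF a b"
      then have "u a \<in> V" "u b \<in> V" "x a \<in> P (u a)" "x b \<in> P (u b)" "E (u a) (u b)"
        using uV xP uE by auto
      then show "graphon_rep V E P (x a) (x b) = 1" unfolding graphon_rep_def by auto
    qed
    then have "x \<in> hom_set_graphon M k EF (graphon_rep V E P)"
      using xsp unfolding hom_set_graphon_def by auto
    then have "(\<Sum>i<k. c (x i)) \<ge> 1" using xn xsp by auto
    also have "(\<Sum>i<k. c (x i)) \<le> (\<Sum>i<k. c' (u i))"
      using xA by (intro sum_mono) (auto simp: A_def)
    finally show ?thesis .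
  qed
  then show "is_frac_cover_graph k EF V E c'"
    unfolding is_frac_cover_graph_def using c'01 by auto
qed



theorem proposition3p13:
  fixes M :: "'a::polish_space measure" and k :: nat and EF :: "nat \<Rightarrow> nat \<Rightarrow> bool"
    and V :: "'v set" and E :: "'v \<Rightarrow> 'v \<Rightarrow> bool" and P :: "'v \<Rightarrow> 'a set"
  assumes "sets M = sets borel" and "prob_space M" and "atomless M"
    and "simple_graph {0..<k} EF"
    and "simple_graph V E"
    and "is_vertex_partition M V P"
  shows "fcov_graph k EF V E = ereal (real (card V)) * fcov_graphon M k EF (graphon_rep V E P)"
proof -
  have fin: "finite V" using assms(5) unfolding simple_graph_def by auto
  have n0: "real (card V) > 0" using part_facts(1)[OF assms(2,6) fin] by simp
  let ?Q = "\<lambda>x. \<exists>c. x = ereal (integral\<^sup>L M c) \<and> is_frac_cover_graphon M k EF (graphon_rep V E P) c"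
  have eqs: "{ereal (\<Sum>v\<in>V. c v) | c. is_frac_cover_graph k EF V E c}
      = {ereal (real (card V)) * x | x. ?Q x}"
  proof (intro set_eqI iffI)
    fix y assume "y \<in> {ereal (\<Sum>v\<in>V. c v) | c. is_frac_cover_graph k EF V E c}"
    then obtain c where y: "y = ereal (\<Sum>v\<in>V. c v)" and cv: "is_frac_cover_graph k EF V E c" by auto
    note g = graph_to_graphon[OF assms(2,6) fin assms(4,5) cv]
    show "y \<in> {ereal (real (card V)) * x | x. ?Q x}"
      using g y by (intro CollectI exI[of _ "ereal (integral\<^sup>L M (\<lambda>x. \<Sum>w\<in>V. c w * indicator (P w) x))"]) auto
  next
    fix y assume "y \<in> {ereal (real (card V)) * x | x. ?Q x}"
    then obtain c where y: "y = ereal (real (card V)) * ereal (integral\<^sup>L M c)"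
      and cv: "is_frac_cover_graphon M k EF (graphon_rep V E P) c" by blast
    note g = graphon_to_graph[OF assms(2,6) fin cv]
    show "y \<in> {ereal (\<Sum>v\<in>V. c v) | c. is_frac_cover_graph k EF V E c}"
      using g y by (auto intro!: exI[of _ "\<lambda>v. real (card V) * (LINT x|M. indicator (P v) x * c x)"])
  qed
  have "fcov_graphon M k EF (graphon_rep V E P) = Inf {x. ?Q x}"
    unfolding fcov_graphon_def by (intro arg_cong[where f=Inf]) auto
  then show ?thesis
    unfolding fcov_graph_def eqs using ereal_Inf_cmult[OF n0, of ?Q] by simp
qed

end
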